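(* Let $s_j=\sigma_j+it_j\in\mathbb{C}$ ($j=1,2,3$). The double series $\sum_{m=1}^\infty\sum_{n<m}m^{-s_1}n^{-s_2}(m+n)^{-s_3}$ (over positive integers $n<m$) converges absolutely when $\sigma_1+\sigma_3>1$ and $\sigma_1+\sigma_2+\sigma_3>2$. The series $\sum_{k=2}^\infty\left|\sum_{k/2<m\le k-1}m^{-s_1}(k-m)^{-s_2}\right|^2k^{-s_3}$ converges absolutely when $2\sigma_1+\sigma_3>1$ and $2\sigma_1+2\sigma_2+\sigma_3>3$.
   Context: Complex powers $n^{s}=e^{s\log n}$ use the real logarithm of positive integers; $\sigma_j=\Re s_j$. *)

theory Defs
  imports "HOL-Analysis.Analysis"
begin

end

theory Submission
  imports Defs
begin


lemma powr_shift:
  fixes x y b c :: real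
  assumes "0 < x" "x \<le> y" "b \<le> c"
  shows "x powr (-b) \<le> x powr (-c) * y powr (c - b)"
proof -
  have "x powr (-b) = x powr (-c) * x powr (c - b)" by (simp add: powr_add[symmetric])
  also have "\<dots> \<le> x powr (-c) * y powr (c - b)"
    by (rule mult_left_mono) (use assms in \<open>auto intro: powr_mono2\<close>)
  finally show ?thesis .
qed

lemma powr_compare:
  fixes x y t :: real
  assumes "0 < x" "0 < y" "x \<le> 2 * y" "y \<le> 2 * x"
  shows "x powr t \<le> 2 powr \<bar>t\<bar> * y powr t"
proof -
  have q: "x powr t = (x / y) powr t * y powr t" using assms by (simp add: powr_divide)
  have "(x / y) powr t \<le> 2 powr \<bar>t\<bar>"
  proof (cases "t \<ge> 0")
    case True
    have "x / y \<le> 2" using assms by (simp add: divide_le_eq)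
    then have "(x/y) powr t \<le> 2 powr t" using True assms by (intro powr_mono2) auto
    then show ?thesis using True by simp
  next
    case False
    have "1/2 \<le> x / y" using assms by (simp add: le_divide_eq)
    then have "(x/y) powr t \<le> (1/2) powr t" using False assms by (intro powr_mono2') auto
    also have "\<dots> = 2 powr (-t)" by (simp add: powr_divide powr_minus_divide)
    finally show ?thesis using False by simp
  qed
  then show ?thesis unfolding q by (intro mult_right_mono) auto
qed

lemma norm_nat_powr: "norm (of_nat n powr (s::complex)) = real n powr Re s"
  by (subst norm_powr_real_powr) auto

lemma part1:
  fixes s1 s2 s3 :: complex
  assumes h1: "Re s1 + Re s3 > 1" and h2: "Re s1 + Re s2 + Re s3 > 2"
  shows "(\<lambda>(m, n). norm (of_nat m powr (-s1) * of_nat n powr (-s2) * of_nat (m + n) powr (-s3)))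
             summable_on {(m::nat, n::nat). 0 < n \<and> n < m}"
proof -
  define a where "a = Re s1 + Re s3"
  define b where "b = Re s2"
  define c where "c = max b ((a+b)/2)"
  define p where "p = a + b - c"
  define K where "K = (2::real) powr \<bar>Re s3\<bar>"
  have c1: "c > 1" "b \<le> c" and p1: "p > 1" using h1 h2 unfolding a_def b_def c_def p_def by (auto simp: max_def field_simps)
  have sc: "summable (\<lambda>n. real n powr (-c))" using c1 by (subst summable_real_powr_iff) auto
  have sp: "summable (\<lambda>n. real n powr (-p))" using p1 by (subst summable_real_powr_iff) auto
  define Z where "Z = (\<Sum>n. real n powr (-c))"
  have Z0: "Z \<ge> 0" unfolding Z_def by (intro suminf_nonneg sc) auto
  have hZ: "((\<lambda>n. real n powr (-c)) has_sum Z) UNIV"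
    unfolding Z_def using sc by (intro sums_nonneg_imp_has_sum) auto
  define F where "F = (\<lambda>(m::nat,n::nat). (K * real m powr (-p)) * real n powr (-c))"
  have gs: "(\<lambda>m. (K * real m powr (-p)) * Z) summable_on UNIV"
    using sp Z0 by (subst summable_on_UNIV_nonneg_real_iff) (auto simp: K_def intro!: summable_mult2 summable_mult)
  have "F summable_on Sigma UNIV (\<lambda>_. UNIV)"
    unfolding F_def
    by (rule summable_on_SigmaI[OF _ gs]) (auto intro!: has_sum_cmult_right hZ simp: K_def)
  then have FS: "F summable_on {(m::nat, n::nat). 0 < n \<and> n < m}"
    by (rule summable_on_subset) auto
  show ?thesis
  proof (rule summable_on_comparison_test[OF FS])
    fix x assume "x \<in> {(m::nat, n::nat). 0 < n \<and> n < m}"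
    then obtain m n where x: "x = (m,n)" and mn: "0 < n" "n < m" by auto
    have e: "norm (of_nat m powr (-s1) * of_nat n powr (-s2) * of_nat (m + n) powr (-s3) :: complex)
        = real m powr (-Re s1) * real n powr (-b) * real (m+n) powr (- Re s3)"
      by (simp only: norm_mult norm_nat_powr b_def uminus_complex.sel)
    have i1: "real (m+n) powr (- Re s3) \<le> K * real m powr (- Re s3)"
      unfolding K_def using powr_compare[of "real (m+n)" "real m" "- Re s3"] mn by simp
    have i2: "real n powr (-b) \<le> real n powr (-c) * real m powr (c - b)"
      using powr_shift[of "real n" "real m" b c] mn c1 by simp
    have "real m powr (-Re s1) * real n powr (-b) * real (m+n) powr (- Re s3)
        \<le> real m powr (-Re s1) * (real n powr (-c) * real m powr (c - b)) * (K * real m powr (- Re s3))"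
      by (intro mult_mono i1 i2 mult_left_mono) (auto simp: K_def)
    also have "\<dots> = K * (real m powr (-Re s1) * real m powr (c - b) * real m powr (- Re s3)) * real n powr (-c)"
      by (simp add: algebra_simps)
    also have "real m powr (-Re s1) * real m powr (c - b) * real m powr (- Re s3) = real m powr (-p)"
      by (simp add: powr_add[symmetric] p_def a_def algebra_simps)
    finally show "(\<lambda>(m, n). norm (of_nat m powr (-s1) * of_nat n powr (-s2) * of_nat (m + n) powr (-s3) :: complex)) x \<le> F x"
      unfolding x F_def case_prod_conv e by (simp add: mult.assoc)
  qed auto
qed

lemma part2:
  fixes s1 s2 s3 :: complex
  assumes h1: "2 * Re s1 + Re s3 > 1" and h2: "2 * Re s1 + 2 * Re s2 + Re s3 > 3"
  shows "(\<lambda>k::nat. norm (complex_of_real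
               ((cmod (\<Sum>m\<in>{m::nat. real k / 2 < real m \<and> m \<le> k - 1}.
                    of_nat m powr (-s1) * of_nat (k - m) powr (-s2)))^2)
               * of_nat k powr (-s3)))
             summable_on {2..}"
proof -
  define a where "a = 2 * Re s1 + Re s3"
  define b where "b = Re s2"
  define c where "c = max b ((a+2*b+1)/4)"
  define p where "p = a + 2*b - 2*c"
  define K where "K = (2::real) powr \<bar>Re s1\<bar>"
  have c1: "c > 1" "b \<le> c" and p1: "p > 1" using h1 h2 unfolding a_def b_def c_def p_def
    by (auto simp: max_def field_simps)
  have sc: "summable (\<lambda>n. real n powr (-c))" using c1 by (subst summable_real_powr_iff) auto
  have sp: "summable (\<lambda>n. real n powr (-p))" using p1 by (subst summable_real_powr_iff) auto
  define Z where "Z = (\<Sum>n. real n powr (-c))"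
  have K0: "K \<ge> 0" by (simp add: K_def)
  have Z0: "Z \<ge> 0" unfolding Z_def by (intro suminf_nonneg sc) auto
  define M where "M = K * Z"
  have gs: "(\<lambda>k. M^2 * real k powr (-p)) summable_on UNIV"
    using sp by (subst summable_on_UNIV_nonneg_real_iff) (auto intro!: summable_mult)
  then have GS: "(\<lambda>k. M^2 * real k powr (-p)) summable_on {2::nat..}"
    by (rule summable_on_subset) auto
  show ?thesis
  proof (rule summable_on_comparison_test[OF GS])
    fix k :: nat assume "k \<in> {2..}"
    then have k2: "k \<ge> 2" by auto
    define A where "A = {m::nat. real k / 2 < real m \<and> m \<le> k - 1}"
    have fA: "finite A" by (rule finite_subset[of _ "{..k}"]) (auto simp: A_def)
    define S where "S = (\<Sum>m\<in>A. of_nat m powr (-s1) * of_nat (k - m) powr (-s2) :: complex)"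
    have "cmod S \<le> (\<Sum>m\<in>A. norm (of_nat m powr (-s1) * of_nat (k - m) powr (-s2) :: complex))"
      unfolding S_def by (rule norm_sum)
    also have "\<dots> \<le> (\<Sum>m\<in>A. (K * real k powr (-Re s1) * real k powr (c - b)) * real (k - m) powr (-c))"
    proof (rule sum_mono)
      fix m assume "m \<in> A"
      then have m: "real k / 2 < real m" "m \<le> k - 1" by (auto simp: A_def)
      have mk: "m \<ge> 1" "k - m \<ge> 1" "k - m \<le> k" "real m \<le> 2 * real k" "real k \<le> 2 * real m"
        using m k2 by linarith+
      have i1: "real m powr (-Re s1) \<le> K * real k powr (-Re s1)"
        unfolding K_def using powr_compare[of "real m" "real k" "-Re s1"] mk by simp
      have i2: "real (k-m) powr (-b) \<le> real (k-m) powr (-c) * real k powr (c - b)"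
        using powr_shift[of "real (k-m)" "real k" b c] mk c1 by simp
      have "norm (of_nat m powr (-s1) * of_nat (k - m) powr (-s2) :: complex)
          = real m powr (-Re s1) * real (k-m) powr (-b)"
        by (simp only: norm_mult norm_nat_powr b_def uminus_complex.sel)
      also have "\<dots> \<le> (K * real k powr (-Re s1)) * (real (k-m) powr (-c) * real k powr (c - b))"
        by (intro mult_mono i1 i2) (auto simp: K0)
      finally show "norm (of_nat m powr (-s1) * of_nat (k - m) powr (-s2) :: complex)
          \<le> (K * real k powr (-Re s1) * real k powr (c - b)) * real (k - m) powr (-c)"
        by (simp add: algebra_simps)
    qed
    also have "\<dots> = (K * real k powr (-Re s1) * real k powr (c - b)) * (\<Sum>m\<in>A. real (k - m) powr (-c))"
      by (simp add: sum_distrib_left)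
    also have "(\<Sum>m\<in>A. real (k - m) powr (-c)) \<le> Z"
    proof -
      have inj: "inj_on (\<lambda>m. k - m) A" by (rule inj_onI) (auto simp: A_def)
      have "(\<Sum>m\<in>A. real (k - m) powr (-c)) = (\<Sum>j\<in>(\<lambda>m. k - m) ` A. real j powr (-c))"
        by (simp add: sum.reindex[OF inj])
      also have "\<dots> \<le> (\<Sum>j\<in>{..k}. real j powr (-c))"
        by (rule sum_mono2) auto
      also have "\<dots> \<le> Z" unfolding Z_def by (rule sum_le_suminf[OF sc]) auto
      finally show ?thesis .
    qed
    then have "(K * real k powr (-Re s1) * real k powr (c - b)) * (\<Sum>m\<in>A. real (k - m) powr (-c))
        \<le> (K * real k powr (-Re s1) * real k powr (c - b)) * Z"
      by (intro mult_left_mono) (auto simp: K0)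
    finally have bS: "cmod S \<le> M * real k powr (c - b - Re s1)"
      by (simp add: M_def powr_add[symmetric] algebra_simps)
    have "(cmod S)^2 \<le> (M * real k powr (c - b - Re s1))^2"
      by (intro power_mono bS) auto
    also have "\<dots> = M^2 * real k powr (2*(c - b - Re s1))"
      proof -
      have e2: "real k powr (c-b-Re s1) * real k powr (c-b-Re s1) = real k powr (2*(c-b-Re s1))"
        by (simp only: powr_add[symmetric] mult_2)
      show ?thesis unfolding power_mult_distrib power2_eq_square e2[symmetric] by (simp only: mult_ac)
    qed
    finally have bS2: "(cmod S)^2 \<le> M^2 * real k powr (2*(c - b - Re s1))" .
    have "norm (complex_of_real ((cmod S)^2) * of_nat k powr (-s3)) = (cmod S)^2 * real k powr (- Re s3)"
      by (simp only: norm_mult norm_nat_powr uminus_complex.sel norm_of_real power_abs abs_norm_cancel)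
    also have "\<dots> \<le> M^2 * real k powr (2*(c - b - Re s1)) * real k powr (- Re s3)"
      by (intro mult_right_mono bS2) auto
    also have "\<dots> = M^2 * real k powr (-p)"
      by (simp add: mult.assoc powr_add[symmetric] p_def a_def algebra_simps)
    finally show "norm (complex_of_real ((cmod (\<Sum>m\<in>{m::nat. real k / 2 < real m \<and> m \<le> k - 1}.
                    of_nat m powr (-s1) * of_nat (k - m) powr (-s2)))^2) * of_nat k powr (-s3))
          \<le> M^2 * real k powr (-p)" unfolding S_def A_def .
  qed auto
qed


theorem theorem2p1:
  fixes s1 s2 s3 :: complex
  shows "(Re s1 + Re s3 > 1 \<and> Re s1 + Re s2 + Re s3 > 2 \<longrightarrow>
           (\<lambda>(m, n). norm (of_nat m powr (-s1) * of_nat n powr (-s2) * of_nat (m + n) powr (-s3)))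
             summable_on {(m::nat, n::nat). 0 < n \<and> n < m})
       \<and> (2 * Re s1 + Re s3 > 1 \<and> 2 * Re s1 + 2 * Re s2 + Re s3 > 3 \<longrightarrow>
           (\<lambda>k::nat. norm (complex_of_real
               ((cmod (\<Sum>m\<in>{m::nat. real k / 2 < real m \<and> m \<le> k - 1}.
                    of_nat m powr (-s1) * of_nat (k - m) powr (-s2)))^2)
               * of_nat k powr (-s3)))
             summable_on {2..})"
  using part1[of s1 s3 s2] part2[of s1 s3 s2] by blast

end
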